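(* Let $H\in(0,1)$ and let $B^H=\{B^H_t:t\in[0,1]\}$ be a fractional Brownian motion with Hurst parameter $H$. Then $$(2\beta+2H+1)\int_0^1 t^{2\beta}(B^H_t)^2\,dt\longrightarrow (B^H_1)^2\quad\text{in }L^2(\Omega)\text{ as }\beta\uparrow+\infty.$$
   Context: A fractional Brownian motion with Hurst parameter $H\in(0,1)$ is a centered Gaussian process with covariance $\mathbb E[B^H_tB^H_s]=\tfrac12(s^{2H}+t^{2H}-|t-s|^{2H})$. *)

theory Defs
  imports "HOL-Probability.Probability"
begin

definition gaussian_rv :: "'a measure \<Rightarrow> ('a \<Rightarrow> real) \<Rightarrow> bool" where
  "gaussian_rv M X \<longleftrightarrow> X \<in> borel_measurable M \<and>
     ((\<exists>\<mu> \<sigma>. \<sigma> > 0 \<and> distributed M lborel X (normal_density \<mu> \<sigma>)) \<or>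
      (\<exists>c. AE \<omega> in M. X \<omega> = c))"

definition fbm :: "'a measure \<Rightarrow> real \<Rightarrow> (real \<Rightarrow> 'a \<Rightarrow> real) \<Rightarrow> bool" where
  "fbm M H B \<longleftrightarrow> prob_space M \<and> 0 < H \<and> H < 1 \<and>
     (\<forall>t\<in>{0..1}. B t \<in> borel_measurable M) \<and>
     (\<forall>I c. finite I \<and> I \<subseteq> {0..1} \<longrightarrow> gaussian_rv M (\<lambda>\<omega>. \<Sum>t\<in>I. c t * B t \<omega>)) \<and>
     (\<forall>t\<in>{0..1}. (\<integral>\<omega>. B t \<omega> \<partial>M) = 0) \<and>
     (\<forall>s\<in>{0..1}. \<forall>t\<in>{0..1}.
        (\<integral>\<omega>. B t \<omega> * B s \<omega> \<partial>M) = (s powr (2*H) + t powr (2*H) - \<bar>t - s\<bar> powr (2*H)) / 2) \<and>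
     (\<forall>\<omega>\<in>space M. continuous_on {0..1} (\<lambda>t. B t \<omega>))"

end

theory Submission
  imports Defs "HOL-Real_Asymp.Real_Asymp"
begin

lemma gauss_mom:
  assumes P: "prob_space M" and G: "gaussian_rv M Z" and E0: "(\<integral>\<omega>. Z \<omega> \<partial>M) = 0"
  shows "integrable M Z \<and> integrable M (\<lambda>\<omega>. (Z \<omega>)^2) \<and> integrable M (\<lambda>\<omega>. (Z \<omega>)^4) \<and>
     (\<integral>\<omega>. (Z \<omega>)^4 \<partial>M) = 3 * (\<integral>\<omega>. (Z \<omega>)^2 \<partial>M)^2"
proof -
  interpret prob_space M by (rule P)
  have Zm[measurable]: "Z \<in> borel_measurable M" using G unfolding gaussian_rv_def by blast
  from G consider (N) \<mu> \<sigma> where "\<sigma> > 0" "distributed M lborel Z (normal_density \<mu> \<sigma>)"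
    | (C) c where "AE \<omega> in M. Z \<omega> = c" unfolding gaussian_rv_def by blast
  then show ?thesis
  proof cases
    case (N \<mu> \<sigma>)
    have "\<mu> = 0" using normal_distributed_expectation[OF N] E0 by simp
    have I: "integrable M (\<lambda>\<omega>. (Z \<omega>)^k)" for k
      using distributed_integrable[OF N(2), of "\<lambda>x. x^k"] integrable_normal_moment[OF N(1), of \<mu> k] \<open>\<mu> = 0\<close>
      by simp
    have E: "(\<integral>\<omega>. (Z \<omega>)^(2*k) \<partial>M) = fact (2 * k) / ((2 / \<sigma>\<^sup>2)^k * fact k)" for k
      using distributed_integral[OF N(2), of "\<lambda>x. x^(2*k)"] integral_normal_moment_even[OF N(1), of \<mu> k] \<open>\<mu> = 0\<close>
      by simp
    have E2: "(\<integral>\<omega>. (Z \<omega>)^2 \<partial>M) = \<sigma>^2" using E[of 1] by simp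
    have E4: "(\<integral>\<omega>. (Z \<omega>)^4 \<partial>M) = 3 * \<sigma>^4" using E[of 2] N(1)
      by (simp add: fact_numeral field_simps power2_eq_square eval_nat_numeral)
    have "(\<sigma>^2)^2 = \<sigma>^4" by (simp add: power_mult[symmetric])
    then show ?thesis using I[of 1] I[of 2] I[of 4] E2 E4 by simp
  next
    case (C c)
    have "integrable M (\<lambda>_. c)" by simp
    then have IZ: "integrable M Z" using integrable_cong_AE[of Z M "\<lambda>_. c"] C by (simp add: prob_space)
    have "(\<integral>\<omega>. Z \<omega> \<partial>M) = c" using integral_cong_AE[of Z M "\<lambda>_. c"] C by (simp add: prob_space)
    then have c0: "c = 0" using E0 by simp
    have A2: "AE \<omega> in M. (Z \<omega>)^k = 0" if "k > 0" for k::nat using C c0 that by auto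
    have "integrable M (\<lambda>\<omega>. (Z \<omega>)^k)" if "k > 0" for k::nat
      using integrable_cong_AE[of "\<lambda>\<omega>. (Z \<omega>)^k" M "\<lambda>_. 0"] A2[OF that] by simp
    moreover have "(\<integral>\<omega>. (Z \<omega>)^k \<partial>M) = 0" if "k > 0" for k::nat
      using integral_cong_AE[of "\<lambda>\<omega>. (Z \<omega>)^k" M "\<lambda>_. 0"] A2[OF that] by simp
    ultimately show ?thesis using IZ by simp
  qed
qed

lemma fbm_gauss:
  assumes F: "fbm M H B" and "finite I" "I \<subseteq> {0..1}"
  shows "gaussian_rv M (\<lambda>\<omega>. \<Sum>t\<in>I. c t * B t \<omega>)"
  using assms unfolding fbm_def by blast

lemma fbm_lin:
  assumes F: "fbm M H B" and s: "s \<in> {0..1}" and t: "t \<in> {0..1}"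
  shows "gaussian_rv M (\<lambda>\<omega>. a * B s \<omega> + b * B t \<omega>)"
proof (cases "s = t")
  case True
  have "gaussian_rv M (\<lambda>\<omega>. \<Sum>u\<in>{s}. (\<lambda>_. a + b) u * B u \<omega>)"
    by (rule fbm_gauss[OF F]) (use s in auto)
  then show ?thesis using True by (simp add: algebra_simps)
next
  case False
  have "gaussian_rv M (\<lambda>\<omega>. \<Sum>u\<in>{s,t}. (\<lambda>u. if u = s then a else b) u * B u \<omega>)"
    by (rule fbm_gauss[OF F]) (use s t in auto)
  then show ?thesis using False by simp
qed

definition cov :: "real \<Rightarrow> real \<Rightarrow> real \<Rightarrow> real" where
  "cov H s t = (s powr (2*H) + t powr (2*H) - \<bar>t - s\<bar> powr (2*H)) / 2"

lemma fbm_basic: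
  assumes F: "fbm M H B" and t: "t \<in> {0..1}"
  shows "integrable M (B t)" "integrable M (\<lambda>\<omega>. (B t \<omega>)^2)" "(\<integral>\<omega>. B t \<omega> \<partial>M) = 0"
    "B t \<in> borel_measurable M"
proof -
  have P: "prob_space M" using F unfolding fbm_def by blast
  have G: "gaussian_rv M (\<lambda>\<omega>. 1 * B t \<omega> + 0 * B t \<omega>)" by (rule fbm_lin[OF F t t])
  have E: "(\<integral>\<omega>. B t \<omega> \<partial>M) = 0" using F t unfolding fbm_def by blast
  from gauss_mom[OF P _ ] G E show "integrable M (B t)" "integrable M (\<lambda>\<omega>. (B t \<omega>)^2)"
    by auto
  show "(\<integral>\<omega>. B t \<omega> \<partial>M) = 0" by (rule E)
  show "B t \<in> borel_measurable M" using F t unfolding fbm_def by blast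
qed

lemma fbm_cov:
  assumes F: "fbm M H B" and s: "s \<in> {0..1}" and t: "t \<in> {0..1}"
  shows "(\<integral>\<omega>. B s \<omega> * B t \<omega> \<partial>M) = cov H s t"
proof -
  have "(\<integral>\<omega>. B s \<omega> * B t \<omega> \<partial>M) = (\<integral>\<omega>. B t \<omega> * B s \<omega> \<partial>M)" by (simp add: mult.commute)
  also have "\<dots> = cov H s t" using F s t unfolding fbm_def cov_def by blast
  finally show ?thesis .
qed

lemma fbm_comb:
  fixes a b :: real
  assumes F: "fbm M H B" and s: "s \<in> {0..1}" and t: "t \<in> {0..1}"
  defines "Z \<equiv> (\<lambda>\<omega>. a * B s \<omega> + b * B t \<omega>)"
  shows "integrable M (\<lambda>\<omega>. (Z \<omega>)^2)" "integrable M (\<lambda>\<omega>. (Z \<omega>)^4)"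
    "(\<integral>\<omega>. (Z \<omega>)^2 \<partial>M) = a^2 * cov H s s + 2*a*b * cov H s t + b^2 * cov H t t"
    "(\<integral>\<omega>. (Z \<omega>)^4 \<partial>M) = 3 * (\<integral>\<omega>. (Z \<omega>)^2 \<partial>M)^2"
proof -
  have P: "prob_space M" using F unfolding fbm_def by blast
  have G: "gaussian_rv M Z" unfolding Z_def by (rule fbm_lin[OF F s t])
  note bs = fbm_basic[OF F s] and bt = fbm_basic[OF F t]
  have E0: "(\<integral>\<omega>. Z \<omega> \<partial>M) = 0" unfolding Z_def using bs bt by simp
  note gm = gauss_mom[OF P G E0]
  then show "integrable M (\<lambda>\<omega>. (Z \<omega>)^2)" "integrable M (\<lambda>\<omega>. (Z \<omega>)^4)"
     "(\<integral>\<omega>. (Z \<omega>)^4 \<partial>M) = 3 * (\<integral>\<omega>. (Z \<omega>)^2 \<partial>M)^2" by auto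
  have G1: "gaussian_rv M (\<lambda>\<omega>. 1 * B s \<omega> + 1 * B t \<omega>)" by (rule fbm_lin[OF F s t])
  have E1: "(\<integral>\<omega>. 1 * B s \<omega> + 1 * B t \<omega> \<partial>M) = 0" using bs bt by simp
  have I1: "integrable M (\<lambda>\<omega>. (1 * B s \<omega> + 1 * B t \<omega>)^2)" using gauss_mom[OF P G1 E1] by blast
  have eqp: "(\<lambda>\<omega>. B s \<omega> * B t \<omega>) = (\<lambda>\<omega>. ((1 * B s \<omega> + 1 * B t \<omega>)^2 - (B s \<omega>)^2 - (B t \<omega>)^2)/2)"
    by (auto simp: power2_eq_square algebra_simps)
  have Ist: "integrable M (\<lambda>\<omega>. B s \<omega> * B t \<omega>)" unfolding eqp using I1 bs bt by simp
  have eqz: "(\<lambda>\<omega>. (Z \<omega>)^2) = (\<lambda>\<omega>. a^2 * (B s \<omega>)^2 + 2*a*b * (B s \<omega> * B t \<omega>) + b^2 * (B t \<omega>)^2)"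
    unfolding Z_def by (auto simp: power2_eq_square algebra_simps)
  have "(\<integral>\<omega>. (Z \<omega>)^2 \<partial>M) = a^2 * (\<integral>\<omega>. (B s \<omega>)^2 \<partial>M) + 2*a*b * (\<integral>\<omega>. B s \<omega> * B t \<omega> \<partial>M) + b^2 * (\<integral>\<omega>. (B t \<omega>)^2 \<partial>M)"
    unfolding eqz using bs bt Ist by simp
  also have "\<dots> = a^2 * cov H s s + 2*a*b * cov H s t + b^2 * cov H t t"
    using fbm_cov[OF F s s] fbm_cov[OF F s t] fbm_cov[OF F t t] by (simp add: power2_eq_square)
  finally show "(\<integral>\<omega>. (Z \<omega>)^2 \<partial>M) = a^2 * cov H s s + 2*a*b * cov H s t + b^2 * cov H t t" .
qed

lemma cov_tt: "t \<ge> 0 \<Longrightarrow> cov H t t = t powr (2*H)"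
  unfolding cov_def by simp

lemma fbm_B4:
  assumes F: "fbm M H B" and t: "t \<in> {0..1}"
  shows "integrable M (\<lambda>\<omega>. (B t \<omega>)^4)" "(\<integral>\<omega>. (B t \<omega>)^4 \<partial>M) \<le> 3"
proof -
  note c = fbm_comb[OF F t t, of 1 0]
  have H: "0 < H" using F unfolding fbm_def by blast
  show "integrable M (\<lambda>\<omega>. (B t \<omega>)^4)" using c by simp
  have "(\<integral>\<omega>. (B t \<omega>)^4 \<partial>M) = 3 * (t powr (2*H))^2" using c cov_tt[of t H] t by simp
  also have "\<dots> \<le> 3 * 1^2"
    using t H by (intro mult_left_mono power_mono powr_le1) auto
  finally show "(\<integral>\<omega>. (B t \<omega>)^4 \<partial>M) \<le> 3" by simp
qed

lemma fbm_incr: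
  assumes F: "fbm M H B" and t: "t \<in> {0..1}"
  shows "integrable M (\<lambda>\<omega>. ((B t \<omega>)^2 - (B 1 \<omega>)^2)^2)"
    "(\<integral>\<omega>. ((B t \<omega>)^2 - (B 1 \<omega>)^2)^2 \<partial>M) \<le> 26 * (1 - t) powr (2*H)"
proof -
  have H: "0 < H" using F unfolding fbm_def by blast
  have one: "(1::real) \<in> {0..1}" by simp
  note bt = fbm_basic[OF F t] and b1 = fbm_basic[OF F one]
  have "integrable M (\<lambda>\<omega>. ((B t \<omega>)^2 - (B 1 \<omega>)^2)^2) \<and>
    (\<integral>\<omega>. ((B t \<omega>)^2 - (B 1 \<omega>)^2)^2 \<partial>M) \<le> 26 * (1 - t) powr (2*H)"
  proof (cases "t = 1")
    case True
    then show ?thesis by simp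
  next
    case False
    then have tl: "t < 1" using t by simp
    define v where "v = (1 - t) powr (2*H)"
    have v0: "v > 0" unfolding v_def using tl by simp
    note cD = fbm_comb[OF F t one, of 1 "-1"]
    note cS = fbm_comb[OF F t one, of 1 1]
    have ct1: "cov H t 1 = (t powr (2*H) + 1 - (1 - t) powr (2*H)) / 2"
      unfolding cov_def using t by simp
    have c11: "cov H 1 1 = 1" using cov_tt[of 1 H] by simp
    have ED2: "(\<integral>\<omega>. (B t \<omega> - B 1 \<omega>)^2 \<partial>M) = v"
      using cD(3) cov_tt[of t H] t ct1 c11 unfolding v_def by (simp add: field_simps)
    have ED4: "(\<integral>\<omega>. (B t \<omega> - B 1 \<omega>)^4 \<partial>M) = 3 * v^2" using cD(4) ED2 by simp
    have tp: "t powr (2*H) \<le> 1" using t H by (intro powr_le1) auto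
    have ES2e: "2 * (1 - t) powr (H * 2) + 2 * (\<integral>\<omega>. (B t \<omega> + B 1 \<omega>)^2 \<partial>M) = 4 + 4 * t powr (H * 2)"
      using cS(3) cov_tt[of t H] t ct1 c11 by (simp add: field_simps add.commute)
    have q0: "(1 - t) powr (H * 2) \<ge> 0" by simp
    have ES2: "(\<integral>\<omega>. (B t \<omega> + B 1 \<omega>)^2 \<partial>M) \<le> 4"
    proof -
      have "t powr (H*2) \<le> 1" using tp by (simp add: mult.commute)
      then show ?thesis using ES2e q0 by linarith
    qed
    have ES2p: "(\<integral>\<omega>. (B t \<omega> + B 1 \<omega>)^2 \<partial>M) \<ge> 0" by simp
    have ES4: "(\<integral>\<omega>. (B t \<omega> + B 1 \<omega>)^4 \<partial>M) \<le> 48"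
    proof -
      have "(\<integral>\<omega>. (B t \<omega> + B 1 \<omega>)^4 \<partial>M) = 3 * (\<integral>\<omega>. (B t \<omega> + B 1 \<omega>)^2 \<partial>M)^2" using cS(4) by simp
      also have "\<dots> \<le> 3 * 4^2" using ES2 ES2p by (intro mult_left_mono power_mono) auto
      finally show ?thesis by simp
    qed
    have ID4: "integrable M (\<lambda>\<omega>. (B t \<omega> - B 1 \<omega>)^4)" using cD(2) by simp
    have IS4: "integrable M (\<lambda>\<omega>. (B t \<omega> + B 1 \<omega>)^4)" using cS(2) by simp
    have pw: "((x::real)^2 - y^2)^2 \<le> ((x - y)^4 / v + v * (x + y)^4) / 2" for x y
    proof -
      define pp where "pp = (x - y)^2"
      define qq where "qq = (x + y)^2"
      have "0 \<le> (pp - v * qq)^2" by simp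
      hence "2 * v * (pp * qq) \<le> pp^2 + v^2*qq^2" by (simp add: power2_diff algebra_simps power2_eq_square)
      hence "pp * qq \<le> (pp^2/v + v * qq^2)/2" using v0 by (simp add: field_simps power2_eq_square)
      moreover have "(x^2 - y^2)^2 = pp * qq" unfolding pp_def qq_def by (simp add: power2_eq_square algebra_simps)
      moreover have "pp^2 = (x-y)^4" "qq^2 = (x+y)^4" unfolding pp_def qq_def by simp_all
      ultimately show ?thesis by simp
    qed
    have IG: "integrable M (\<lambda>\<omega>. ((B t \<omega> - B 1 \<omega>)^4 / v + v * (B t \<omega> + B 1 \<omega>)^4) / 2)"
      using ID4 IS4 by simp
    have meas: "(\<lambda>\<omega>. ((B t \<omega>)^2 - (B 1 \<omega>)^2)^2) \<in> borel_measurable M"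
      using bt(4) b1(4) by measurable
    have I: "integrable M (\<lambda>\<omega>. ((B t \<omega>)^2 - (B 1 \<omega>)^2)^2)"
      by (rule Bochner_Integration.integrable_bound[OF IG meas])
        (use pw v0 in \<open>auto intro!: always_eventually\<close>)
    have "(\<integral>\<omega>. ((B t \<omega>)^2 - (B 1 \<omega>)^2)^2 \<partial>M)
        \<le> (\<integral>\<omega>. ((B t \<omega> - B 1 \<omega>)^4 / v + v * (B t \<omega> + B 1 \<omega>)^4) / 2 \<partial>M)"
      by (rule integral_mono[OF I IG]) (rule pw)
    also have "\<dots> = ((\<integral>\<omega>. (B t \<omega> - B 1 \<omega>)^4 \<partial>M) / v + v * (\<integral>\<omega>. (B t \<omega> + B 1 \<omega>)^4 \<partial>M)) / 2"
      using ID4 IS4 by simp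
    also have "\<dots> \<le> (3 * v + v * 48) / 2"
      using ED4 ES4 v0 by (simp add: power2_eq_square)
    also have "\<dots> \<le> 26 * v" using v0 by simp
    finally show ?thesis using I unfolding v_def by simp
  qed
  then show "integrable M (\<lambda>\<omega>. ((B t \<omega>)^2 - (B 1 \<omega>)^2)^2)"
    "(\<integral>\<omega>. ((B t \<omega>)^2 - (B 1 \<omega>)^2)^2 \<partial>M) \<le> 26 * (1 - t) powr (2*H)" by auto
qed

definition Bc :: "(real \<Rightarrow> 'a \<Rightarrow> real) \<Rightarrow> real \<Rightarrow> 'a \<Rightarrow> real" where
  "Bc B t \<omega> = B (max 0 (min 1 t)) \<omega>"

lemma Bc_eq: "t \<in> {0..1} \<Longrightarrow> Bc B t \<omega> = B t \<omega>"
  unfolding Bc_def by simp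

lemma Bc_cont:
  assumes F: "fbm M H B" and w: "\<omega> \<in> space M"
  shows "continuous_on UNIV (\<lambda>t. Bc B t \<omega>)"
proof -
  have c: "continuous_on {0..1} (\<lambda>t. B t \<omega>)" using F w unfolding fbm_def by blast
  have "continuous_on UNIV (\<lambda>t. B (max 0 (min 1 t)) \<omega>)"
  proof (rule continuous_on_compose2[OF c])
    show "continuous_on UNIV (\<lambda>t::real. max 0 (min 1 t))" by (intro continuous_intros)
    show "(\<lambda>t::real. max 0 (min 1 t)) ` UNIV \<subseteq> {0..1}" by auto
  qed
  then show ?thesis unfolding Bc_def .
qed

lemma Bc_meas1:
  assumes F: "fbm M H B"
  shows "Bc B s \<in> borel_measurable M"
proof -
  have "max 0 (min 1 s) \<in> {0..1::real}" by simp
  then have "B (max 0 (min 1 s)) \<in> borel_measurable M" using F unfolding fbm_def by blast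
  then show ?thesis unfolding Bc_def by simp
qed

lemma floor_approx: "(\<lambda>n. real_of_int \<lfloor>real (Suc n) * t\<rfloor> / real (Suc n)) \<longlonglongrightarrow> (t::real)"
proof (rule tendsto_sandwich[of "\<lambda>n. t - 1 / real (Suc n)" _ _ "\<lambda>n. t"])
  show "\<forall>\<^sub>F n in sequentially. t - 1 / real (Suc n) \<le> real_of_int \<lfloor>real (Suc n) * t\<rfloor> / real (Suc n)"
  proof (intro always_eventually allI)
    fix n
    have "real (Suc n) * t - 1 \<le> real_of_int \<lfloor>real (Suc n) * t\<rfloor>" by linarith
    then have "(real (Suc n) * t - 1) / real (Suc n) \<le> real_of_int \<lfloor>real (Suc n) * t\<rfloor> / real (Suc n)"
      by (rule divide_right_mono) simp
    moreover have "(real (Suc n) * t - 1) / real (Suc n) = t - 1 / real (Suc n)"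
      by (simp add: diff_divide_distrib)
    ultimately show "t - 1 / real (Suc n) \<le> real_of_int \<lfloor>real (Suc n) * t\<rfloor> / real (Suc n)"
      by simp
  qed
  show "\<forall>\<^sub>F n in sequentially. real_of_int \<lfloor>real (Suc n) * t\<rfloor> / real (Suc n) \<le> t"
  proof (intro always_eventually allI)
    fix n
    have "real_of_int \<lfloor>real (Suc n) * t\<rfloor> \<le> real (Suc n) * t" by linarith
    then have "real_of_int \<lfloor>real (Suc n) * t\<rfloor> / real (Suc n) \<le> real (Suc n) * t / real (Suc n)"
      by (rule divide_right_mono) simp
    then show "real_of_int \<lfloor>real (Suc n) * t\<rfloor> / real (Suc n) \<le> t"
      by simp
  qed
  have "(\<lambda>n. 1 / real (Suc n)) \<longlonglongrightarrow> 0" using LIMSEQ_inverse_real_of_nat by (simp add: inverse_eq_divide)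
  then show "(\<lambda>n. t - 1 / real (Suc n)) \<longlonglongrightarrow> t" using tendsto_diff[of "\<lambda>_. t" t] by force
qed simp

lemma Bc_meas:
  fixes M :: "'a measure"
  assumes F: "fbm M H B"
  shows "(\<lambda>x. Bc B (snd x) (fst x)) \<in> borel_measurable (M \<Otimes>\<^sub>M lborel)"
proof (rule borel_measurable_LIMSEQ_real)
  fix n :: nat
  show "(\<lambda>x. Bc B (real_of_int \<lfloor>real (Suc n) * snd x\<rfloor> / real (Suc n)) (fst x)) \<in> borel_measurable (M \<Otimes>\<^sub>M lborel)"
  proof (rule measurable_compose_countable[where f = "\<lambda>i x. Bc B (real_of_int i / real (Suc n)) (fst x)"
        and g = "\<lambda>x. \<lfloor>real (Suc n) * snd x\<rfloor>"])
    fix i :: int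
    show "(\<lambda>x. Bc B (real_of_int i / real (Suc n)) (fst x)) \<in> borel_measurable (M \<Otimes>\<^sub>M lborel)"
      using measurable_comp[OF measurable_fst Bc_meas1[OF F]] by (simp add: comp_def)
  next
    show "(\<lambda>x. \<lfloor>real (Suc n) * snd x\<rfloor>) \<in> (M \<Otimes>\<^sub>M lborel) \<rightarrow>\<^sub>M count_space UNIV"
      by measurable
  qed
next
  fix x :: "'a \<times> real" assume x: "x \<in> space (M \<Otimes>\<^sub>M lborel)"
  then have w: "fst x \<in> space M" by (auto simp: space_pair_measure)
  have "isCont (\<lambda>t. Bc B t (fst x)) (snd x)"
    using Bc_cont[OF F w] by (simp add: continuous_on_eq_continuous_at)
  then show "(\<lambda>n. Bc B (real_of_int \<lfloor>real (Suc n) * snd x\<rfloor> / real (Suc n)) (fst x)) \<longlonglongrightarrow> Bc B (snd x) (fst x)"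
    using isCont_tendsto_compose floor_approx by blast
qed

lemma tonelli_bound:
  fixes M :: "'a measure" and h :: "real \<Rightarrow> 'a \<Rightarrow> real"
  assumes P: "prob_space M"
  and hm: "(\<lambda>x. h (snd x) (fst x)) \<in> borel_measurable (M \<Otimes>\<^sub>M lborel)"
  and h0: "\<And>t \<omega>. 0 \<le> h t \<omega>"
  and hc: "\<And>\<omega>. \<omega> \<in> space M \<Longrightarrow> continuous_on {0..1} (\<lambda>t. h t \<omega>)"
  and hi: "\<And>t. t \<in> {0..1} \<Longrightarrow> integrable M (h t)"
  and hb: "\<And>t. t \<in> {0..1} \<Longrightarrow> (\<integral>\<omega>. h t \<omega> \<partial>M) \<le> u t"
  and uc: "continuous_on {0..1} u"
  shows "(\<lambda>\<omega>. integral {0..1} (\<lambda>t. h t \<omega>)) \<in> borel_measurable M"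
   "integrable M (\<lambda>\<omega>. integral {0..1} (\<lambda>t. h t \<omega>))"
   "(\<integral>\<omega>. integral {0..1} (\<lambda>t. h t \<omega>) \<partial>M) \<le> integral {0..1} u"
proof -
  interpret prob_space M by (rule P)
  interpret PS: pair_sigma_finite M lborel
    by (simp add: pair_sigma_finite.intro lborel.sigma_finite_measure_axioms sigma_finite_measure_axioms)
  define J where "J = (\<lambda>\<omega>. integral {0..1} (\<lambda>t. h t \<omega>))"
  define f where "f = (\<lambda>\<omega> t. ennreal (h t \<omega>) * indicator {0..1::real} t)"
  have fm: "case_prod f \<in> borel_measurable (M \<Otimes>\<^sub>M lborel)"
  proof -
    have "(\<lambda>x. ennreal (h (snd x) (fst x)) * indicator {0..1::real} (snd x)) \<in> borel_measurable (M \<Otimes>\<^sub>M lborel)"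
      using hm by measurable
    then show ?thesis unfolding f_def by (simp add: case_prod_beta')
  qed
  have NJ: "(\<integral>\<^sup>+t. f \<omega> t \<partial>lborel) = ennreal (J \<omega>)" if w: "\<omega> \<in> space M" for \<omega>
  proof -
    have "((\<lambda>t. h t \<omega>) has_integral J \<omega>) {0..1}"
      unfolding J_def by (intro integrable_integral integrable_continuous_interval hc[OF w])
    then show ?thesis unfolding f_def by (rule nn_integral_has_integral_lebesgue'[rotated]) (simp add: h0)
  qed
  have J0: "J \<omega> \<ge> 0" if w: "\<omega> \<in> space M" for \<omega>
    unfolding J_def by (rule integral_nonneg) (use hc[OF w] h0 in \<open>auto intro!: integrable_continuous_interval\<close>)
  have Jm: "J \<in> borel_measurable M"
  proof -
    have "(\<lambda>\<omega>. enn2real (\<integral>\<^sup>+t. f \<omega> t \<partial>lborel)) \<in> borel_measurable M"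
      using lborel.borel_measurable_nn_integral[OF fm] by measurable
    then show ?thesis
      by (rule measurable_cong[THEN iffD1, rotated]) (simp add: NJ J0)
  qed
  then show "(\<lambda>\<omega>. integral {0..1} (\<lambda>t. h t \<omega>)) \<in> borel_measurable M" unfolding J_def .
  have u0: "0 \<le> u t" if "t \<in> {0..1}" for t
  proof -
    have "0 \<le> (\<integral>\<omega>. h t \<omega> \<partial>M)" by (rule Bochner_Integration.integral_nonneg) (simp add: h0)
    then show ?thesis using hb[OF that] by linarith
  qed
  have "(\<integral>\<^sup>+\<omega>. ennreal (J \<omega>) \<partial>M) = (\<integral>\<^sup>+\<omega>. (\<integral>\<^sup>+t. f \<omega> t \<partial>lborel) \<partial>M)"
    by (rule nn_integral_cong) (simp add: NJ)
  also have "\<dots> = (\<integral>\<^sup>+t. (\<integral>\<^sup>+\<omega>. f \<omega> t \<partial>M) \<partial>lborel)"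
    using PS.Fubini'[OF fm] by simp
  also have "\<dots> \<le> (\<integral>\<^sup>+t. ennreal (u t) * indicator {0..1} t \<partial>lborel)"
  proof (rule nn_integral_mono)
    fix t :: real
    show "(\<integral>\<^sup>+\<omega>. f \<omega> t \<partial>M) \<le> ennreal (u t) * indicator {0..1} t"
    proof (cases "t \<in> {0..1}")
      case True
      have "(\<integral>\<^sup>+\<omega>. f \<omega> t \<partial>M) = (\<integral>\<^sup>+\<omega>. ennreal (h t \<omega>) \<partial>M)"
        unfolding f_def using True by simp
      also have "\<dots> = ennreal (\<integral>\<omega>. h t \<omega> \<partial>M)"
        by (rule nn_integral_eq_integral[OF hi[OF True]]) (simp add: h0)
      also have "\<dots> \<le> ennreal (u t)" using hb[OF True] by (rule ennreal_leI)
      finally show ?thesis using True by simp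
    next
      case False
      then show ?thesis unfolding f_def by simp
    qed
  qed
  also have "\<dots> = ennreal (integral {0..1} u)"
    by (rule nn_integral_has_integral_lebesgue') (use u0 uc in \<open>auto intro!: integrable_integral integrable_continuous_interval\<close>)
  finally have NB: "(\<integral>\<^sup>+\<omega>. ennreal (J \<omega>) \<partial>M) \<le> ennreal (integral {0..1} u)" .
  have IJ: "integrable M J"
  proof (rule integrableI_bounded[OF Jm])
    have "(\<integral>\<^sup>+\<omega>. ennreal (norm (J \<omega>)) \<partial>M) = (\<integral>\<^sup>+\<omega>. ennreal (J \<omega>) \<partial>M)"
      by (rule nn_integral_cong) (simp add: J0)
    also have "\<dots> < \<infinity>" using NB by (simp add: le_less_trans)
    finally show "(\<integral>\<^sup>+\<omega>. ennreal (norm (J \<omega>)) \<partial>M) < \<infinity>" .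
  qed
  then show "integrable M (\<lambda>\<omega>. integral {0..1} (\<lambda>t. h t \<omega>))" unfolding J_def .
  have "ennreal (\<integral>\<omega>. J \<omega> \<partial>M) = (\<integral>\<^sup>+\<omega>. ennreal (J \<omega>) \<partial>M)"
    by (rule nn_integral_eq_integral[OF IJ, symmetric]) (simp add: J0)
  with NB have "ennreal (\<integral>\<omega>. J \<omega> \<partial>M) \<le> ennreal (integral {0..1} u)" by simp
  moreover have "integral {0..1} u \<ge> 0"
    by (rule integral_nonneg) (use u0 uc in \<open>auto intro!: integrable_continuous_interval\<close>)
  ultimately show "(\<integral>\<omega>. integral {0..1} (\<lambda>t. h t \<omega>) \<partial>M) \<le> integral {0..1} u"
    unfolding J_def by (simp add: ennreal_le_iff)
qed

lemma cs_weighted: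
  fixes w g :: "real \<Rightarrow> real"
  assumes wc: "continuous_on {0..1} w" and gc: "continuous_on {0..1} g"
    and w0: "\<And>t. t \<in> {0..1} \<Longrightarrow> 0 \<le> w t" and Wp: "integral {0..1} w > 0"
  shows "(integral {0..1} (\<lambda>t. w t * g t))^2 \<le> integral {0..1} w * integral {0..1} (\<lambda>t. w t * (g t)^2)"
proof -
  define W where "W = integral {0..1} w"
  define A where "A = integral {0..1} (\<lambda>t. w t * g t)"
  define C where "C = integral {0..1} (\<lambda>t. w t * (g t)^2)"
  define x where "x = - A / W"
  have i1: "(\<lambda>t. w t * (g t)^2) integrable_on {0..1}"
    by (intro integrable_continuous_interval continuous_intros wc gc)
  have i2: "(\<lambda>t. 2 * x * (w t * g t)) integrable_on {0..1}"
    by (intro integrable_continuous_interval continuous_intros wc gc)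
  have i3: "(\<lambda>t. x^2 * w t) integrable_on {0..1}"
    by (intro integrable_continuous_interval continuous_intros wc gc)
  have "0 \<le> integral {0..1} (\<lambda>t. w t * (g t + x)^2)"
    by (rule integral_nonneg) (use w0 in \<open>auto intro!: integrable_continuous_interval continuous_intros wc gc\<close>)
  also have "integral {0..1} (\<lambda>t. w t * (g t + x)^2)
      = integral {0..1} (\<lambda>t. w t * (g t)^2 + 2 * x * (w t * g t) + x^2 * w t)"
    by (rule integral_cong) (simp add: power2_eq_square algebra_simps)
  also have "\<dots> = C + 2 * x * A + x^2 * W"
    unfolding C_def A_def W_def
    using i1 i2 i3 by (simp add: integral_add integrable_add)
  finally have "0 \<le> C + 2 * x * A + x^2 * W" .
  also have "C + 2 * x * A + x^2 * W = C - A^2 / W"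
    unfolding x_def using Wp W_def by (simp add: field_simps power2_eq_square)
  finally have "A^2 / W \<le> C" by simp
  then show ?thesis using Wp unfolding W_def A_def C_def by (simp add: field_simps)
qed

lemma int_powr01:
  assumes "a \<ge> 0"
  shows "integral {0..1} (\<lambda>t::real. t powr a) = 1 / (a + 1)"
  using has_integral_powr_from_0[of a 1] assms by (simp add: integral_unique)

lemma cont_powr01:
  assumes "a > 0"
  shows "continuous_on {0..1::real} (\<lambda>t. t powr a)" "continuous_on {0..1::real} (\<lambda>t. (1 - t) powr a)"
  using assms by (rule_tac continuous_on_powr'; auto intro!: continuous_intros)+

lemma kernel_pointwise:
  fixes t \<delta> b H :: real
  assumes t: "t \<in> {0..1}" and d: "0 < \<delta>" "\<delta> < 1" and b: "b > 0" and H: "H > 0"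
  shows "t powr b * (1 - t) powr H \<le> \<delta> powr H * t powr b + (1 - \<delta>) powr b"
proof (cases "t \<ge> 1 - \<delta>")
  case True
  have "(1 - t) powr H \<le> \<delta> powr H" using True t H by (intro powr_mono2) auto
  then have "t powr b * (1 - t) powr H \<le> t powr b * \<delta> powr H" by (intro mult_left_mono) auto
  then show ?thesis by (simp add: mult.commute add_increasing2)
next
  case False
  have "t powr b \<le> (1 - \<delta>) powr b" using False t b by (intro powr_mono2) auto
  moreover have "(1 - t) powr H \<le> 1" using t H by (intro powr_le1) auto
  ultimately have "t powr b * (1 - t) powr H \<le> (1 - \<delta>) powr b * 1"
    by (intro mult_mono) auto
  then show ?thesis using d by (simp add: add_increasing)
qed

lemma kernel_lim:
  fixes H :: real
  assumes H: "0 < H"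
  shows "((\<lambda>\<beta>. (2*\<beta>+2*H+1) * integral {0..1} (\<lambda>t. t powr (2*\<beta>) * (1 - t) powr (2*H))) \<longlongrightarrow> 0) at_top"
proof (rule order_tendstoI)
  fix a :: real assume "a < 0"
  have "\<forall>\<^sub>F \<beta> in at_top. (0::real) < \<beta>" by (rule eventually_gt_at_top)
  then show "\<forall>\<^sub>F \<beta> in at_top. a < (2*\<beta>+2*H+1) * integral {0..1} (\<lambda>t. t powr (2*\<beta>) * (1 - t) powr (2*H))"
  proof eventually_elim
    case (elim \<beta>)
    have "0 \<le> integral {0..1} (\<lambda>t. t powr (2*\<beta>) * (1 - t) powr (2*H))"
      by (rule integral_nonneg) (use elim H cont_powr01[of "2*\<beta>"] cont_powr01[of "2*H"] in \<open>auto intro!: integrable_continuous_interval continuous_intros\<close>)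
    then show ?case using elim H \<open>a < 0\<close> by (smt (verit) mult_nonneg_nonneg)
  qed
next
  fix \<epsilon> :: real assume e: "0 < \<epsilon>"
  define \<delta> where "\<delta> = min (1/2) ((\<epsilon>/8) powr (1/(2*H)))"
  have d0: "0 < \<delta>" "\<delta> < 1" unfolding \<delta>_def using e by auto
  have dH: "\<delta> powr (2*H) \<le> \<epsilon>/8"
  proof -
    have "\<delta> powr (2*H) \<le> ((\<epsilon>/8) powr (1/(2*H))) powr (2*H)"
      unfolding \<delta>_def using e H by (intro powr_mono2) auto
    also have "\<dots> = \<epsilon>/8" using e H by (simp add: powr_powr)
    finally show ?thesis .
  qed
  have L1: "((\<lambda>\<beta>. (2*\<beta>+2*H+1) * (1 - \<delta>) powr (2*\<beta>)) \<longlongrightarrow> 0) at_top"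
    using d0 by real_asymp
  have E1: "\<forall>\<^sub>F \<beta> in at_top. (2*\<beta>+2*H+1) * (1 - \<delta>) powr (2*\<beta>) < \<epsilon>/4"
    using order_tendstoD(2)[OF L1, of "\<epsilon>/4"] e by simp
  have L2: "((\<lambda>\<beta>. (2*\<beta>+2*H+1) / (2*\<beta>+1)) \<longlongrightarrow> 1) at_top" by real_asymp
  have E2: "\<forall>\<^sub>F \<beta> in at_top. (2*\<beta>+2*H+1) / (2*\<beta>+1) < 2"
    using order_tendstoD(2)[OF L2] by simp
  have E3: "\<forall>\<^sub>F \<beta> in at_top. (0::real) < \<beta>" by (rule eventually_gt_at_top)
  from E1 E2 E3 show "\<forall>\<^sub>F \<beta> in at_top. (2*\<beta>+2*H+1) * integral {0..1} (\<lambda>t. t powr (2*\<beta>) * (1 - t) powr (2*H)) < \<epsilon>"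
  proof eventually_elim
    case (elim \<beta>)
    have c1: "continuous_on {0..1} (\<lambda>t::real. t powr (2*\<beta>))" using cont_powr01[of "2*\<beta>"] elim by simp
    have c2: "continuous_on {0..1} (\<lambda>t::real. (1 - t) powr (2*H))" using cont_powr01[of "2*H"] H by simp
    have "integral {0..1} (\<lambda>t. t powr (2*\<beta>) * (1 - t) powr (2*H))
        \<le> integral {0..1} (\<lambda>t. \<delta> powr (2*H) * t powr (2*\<beta>) + (1 - \<delta>) powr (2*\<beta>))"
      by (rule integral_le) (use c1 c2 kernel_pointwise[OF _ d0, of _ "2*\<beta>" "2*H"] elim H in \<open>auto intro!: integrable_continuous_interval continuous_intros\<close>)
    also have "\<dots> = \<delta> powr (2*H) * (1 / (2*\<beta>+1)) + (1 - \<delta>) powr (2*\<beta>)"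
    proof (rule integral_unique)
      have p: "((\<lambda>t::real. t powr (2*\<beta>)) has_integral (1 / (2*\<beta>+1))) {0..1}"
        using has_integral_powr_from_0[of "2*\<beta>" 1] elim by simp
      have q: "((\<lambda>t::real. (1 - \<delta>) powr (2*\<beta>)) has_integral ((1 - \<delta>) powr (2*\<beta>))) {0..1}"
        using has_integral_const_real[of "(1 - \<delta>) powr (2*\<beta>)" 0 1] by simp
      show "((\<lambda>t. \<delta> powr (2*H) * t powr (2*\<beta>) + (1 - \<delta>) powr (2*\<beta>)) has_integral
          (\<delta> powr (2*H) * (1 / (2*\<beta>+1)) + (1 - \<delta>) powr (2*\<beta>))) {0..1}"
        by (intro has_integral_add has_integral_mult_right p q)
    qed
    finally have "(2*\<beta>+2*H+1) * integral {0..1} (\<lambda>t. t powr (2*\<beta>) * (1 - t) powr (2*H))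
       \<le> (2*\<beta>+2*H+1) * (\<delta> powr (2*H) * (1 / (2*\<beta>+1)) + (1 - \<delta>) powr (2*\<beta>))"
      using elim H by (intro mult_left_mono) auto
    also have "\<dots> = \<delta> powr (2*H) * ((2*\<beta>+2*H+1) / (2*\<beta>+1)) + (2*\<beta>+2*H+1) * (1 - \<delta>) powr (2*\<beta>)"
      by (simp add: algebra_simps)
    also have "\<dots> < \<epsilon>/8 * 2 + \<epsilon>/4"
    proof -
      have "\<delta> powr (2*H) * ((2*\<beta>+2*H+1) / (2*\<beta>+1)) \<le> \<epsilon>/8 * 2"
        using dH elim H e by (intro mult_mono) auto
      then show ?thesis using elim by linarith
    qed
    also have "\<dots> < \<epsilon>" using e by simp
    finally show ?case .
  qed
qed

lemma main_bound:
  fixes M :: "'a measure" and H :: real and B :: "real \<Rightarrow> 'a \<Rightarrow> real" and \<beta> :: real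
  assumes F: "fbm M H B" and bpos: "\<beta> > 0"
  defines "Y \<equiv> (\<lambda>\<omega>. (2*\<beta> + 2*H + 1) * integral {0..1} (\<lambda>t. t powr (2*\<beta>) * (B t \<omega>)\<^sup>2))"
  defines "c \<equiv> 2*\<beta> + 2*H + 1"
  defines "W \<equiv> 1 / (2*\<beta> + 1)"
  defines "kern \<equiv> integral {0..1} (\<lambda>t. t powr (2*\<beta>) * (1 - t) powr (2*H))"
  shows "Y \<in> borel_measurable M" "integrable M (\<lambda>\<omega>. (Y \<omega>)\<^sup>2)"
    "(\<integral>\<omega>. (Y \<omega> - (B 1 \<omega>)\<^sup>2)\<^sup>2 \<partial>M) \<le> 52 * (c * W) * (c * kern) + 6 * (c * W - 1)^2"
proof -
  have P: "prob_space M" and H0: "0 < H" and H1: "H < 1" using F unfolding fbm_def by auto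
  interpret prob_space M by (rule P)
  have one: "(1::real) \<in> {0..1}" by simp
  note b1 = fbm_basic[OF F one]
  have B1m[measurable]: "B 1 \<in> borel_measurable M" by (rule b1(4))
  note B14 = fbm_B4[OF F one]
  note BCm[measurable] = Bc_meas[OF F]
  define w where "w = (\<lambda>t::real. t powr (2*\<beta>))"
  have wc: "continuous_on {0..1} w" unfolding w_def using cont_powr01(1)[of "2*\<beta>"] bpos by simp
  have w0: "0 \<le> w t" for t unfolding w_def by simp
  have Wint: "integral {0..1} w = W" unfolding w_def W_def using int_powr01[of "2*\<beta>"] bpos by simp
  have Wpos: "W > 0" unfolding W_def using bpos by simp
  have c0: "c > 0" unfolding c_def using bpos H0 by simp
  have Bcc: "continuous_on {0..1} (\<lambda>t. Bc B t \<omega>)" if "\<omega> \<in> space M" for \<omega>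
    using Bc_cont[OF F that] by (rule continuous_on_subset) simp
  have Bc1: "Bc B 1 \<omega> = B 1 \<omega>" for \<omega> by (simp add: Bc_eq)
  define I where "I = (\<lambda>\<omega>. integral {0..1} (\<lambda>t. w t * (Bc B t \<omega>)^2))"
  have YI: "Y = (\<lambda>\<omega>. c * I \<omega>)"
    unfolding Y_def I_def c_def w_def by (intro ext arg_cong2[where f="(*)"] refl integral_cong) (simp add: Bc_eq)
  have Im: "I \<in> borel_measurable M"
  proof -
    have "(\<lambda>\<omega>. integral {0..1} (\<lambda>t. w t * (Bc B t \<omega>)^2)) \<in> borel_measurable M"
    proof (rule tonelli_bound(1)[OF P, where u=w])
      show "(\<lambda>x. w (snd x) * (Bc B (snd x) (fst x))^2) \<in> borel_measurable (M \<Otimes>\<^sub>M lborel)"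
        unfolding w_def by measurable
      show "0 \<le> w t * (Bc B t \<omega>)^2" for t \<omega> using w0 by simp
      show "continuous_on {0..1} (\<lambda>t. w t * (Bc B t \<omega>)^2)" if "\<omega> \<in> space M" for \<omega>
        using wc Bcc[OF that] by (intro continuous_intros)
      show "integrable M (\<lambda>\<omega>. w t * (Bc B t \<omega>)^2)" if "t \<in> {0..1}" for t
        using fbm_basic(2)[OF F that] that by (simp add: Bc_eq)
      show "(\<integral>\<omega>. w t * (Bc B t \<omega>)^2 \<partial>M) \<le> w t" if "t \<in> {0..1}" for t
      proof -
        have "(\<integral>\<omega>. w t * (Bc B t \<omega>)^2 \<partial>M) = w t * t powr (2*H)"
          using fbm_cov[OF F that that] cov_tt[of t H] that by (simp add: Bc_eq power2_eq_square)
        also have "\<dots> \<le> w t * 1" using that H0 w0 by (intro mult_left_mono powr_le1) auto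
        finally show ?thesis by simp
      qed
      show "continuous_on {0..1} w" by (rule wc)
    qed
    then show ?thesis unfolding I_def .
  qed
  show Ym: "Y \<in> borel_measurable M" unfolding YI using Im by measurable
  define K4 where "K4 = (\<lambda>\<omega>. integral {0..1} (\<lambda>t. w t * ((Bc B t \<omega>)^2)^2))"
  have K4i: "integrable M K4"
    unfolding K4_def
  proof (rule tonelli_bound(2)[OF P, where u="\<lambda>t. 3 * w t"])
    show "(\<lambda>x. w (snd x) * ((Bc B (snd x) (fst x))^2)^2) \<in> borel_measurable (M \<Otimes>\<^sub>M lborel)"
      unfolding w_def by measurable
    show "0 \<le> w t * ((Bc B t \<omega>)^2)^2" for t \<omega> using w0 by simp
    show "continuous_on {0..1} (\<lambda>t. w t * ((Bc B t \<omega>)^2)^2)" if "\<omega> \<in> space M" for \<omega>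
      using wc Bcc[OF that] by (intro continuous_intros)
    show "integrable M (\<lambda>\<omega>. w t * ((Bc B t \<omega>)^2)^2)" if "t \<in> {0..1}" for t
      using fbm_B4(1)[OF F that] that by (simp add: Bc_eq power_mult[symmetric])
    show "(\<integral>\<omega>. w t * ((Bc B t \<omega>)^2)^2 \<partial>M) \<le> 3 * w t" if "t \<in> {0..1}" for t
    proof -
      have "(\<integral>\<omega>. w t * ((Bc B t \<omega>)^2)^2 \<partial>M) = w t * (\<integral>\<omega>. (B t \<omega>)^4 \<partial>M)"
        using that by (simp add: Bc_eq power_mult[symmetric])
      also have "\<dots> \<le> w t * 3" using fbm_B4(2)[OF F that] w0 by (intro mult_left_mono) auto
      finally show ?thesis by simp
    qed
    show "continuous_on {0..1} (\<lambda>t. 3 * w t)" using wc by (intro continuous_intros)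
  qed
  have IK: "(I \<omega>)^2 \<le> W * K4 \<omega>" if "\<omega> \<in> space M" for \<omega>
  proof -
    have gc: "continuous_on {0..1} (\<lambda>t. (Bc B t \<omega>)^2)" using Bcc[OF that] by (intro continuous_intros)
    show ?thesis using cs_weighted[OF wc gc] w0 Wint Wpos unfolding I_def K4_def by simp
  qed
  show "integrable M (\<lambda>\<omega>. (Y \<omega>)\<^sup>2)"
  proof (rule Bochner_Integration.integrable_bound)
    show "integrable M (\<lambda>\<omega>. c^2 * W * K4 \<omega>)" using K4i by simp
    show "(\<lambda>\<omega>. (Y \<omega>)\<^sup>2) \<in> borel_measurable M" using Ym by measurable
    show "AE \<omega> in M. norm ((Y \<omega>)\<^sup>2) \<le> norm (c^2 * W * K4 \<omega>)"
    proof (rule AE_I2)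
      fix \<omega> assume w: "\<omega> \<in> space M"
      have "norm ((Y \<omega>)\<^sup>2) = c^2 * (I \<omega>)^2" unfolding YI by (simp add: power_mult_distrib)
      also have "\<dots> \<le> c^2 * (W * K4 \<omega>)" using IK[OF w] by (intro mult_left_mono) auto
      also have "\<dots> \<le> norm (c^2 * W * K4 \<omega>)" by simp
      finally show "norm ((Y \<omega>)\<^sup>2) \<le> norm (c^2 * W * K4 \<omega>)" .
    qed
  qed
  define J where "J = (\<lambda>\<omega>. integral {0..1} (\<lambda>t. w t * ((Bc B t \<omega>)^2 - (Bc B 1 \<omega>)^2)^2))"
  define u where "u = (\<lambda>t::real. 26 * (w t * (1 - t) powr (2*H)))"
  have uc: "continuous_on {0..1} u" unfolding u_def
    using wc cont_powr01(2)[of "2*H"] H0 by (auto intro!: continuous_intros)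
  have Jfacts: "J \<in> borel_measurable M \<and> integrable M J \<and> (\<integral>\<omega>. J \<omega> \<partial>M) \<le> integral {0..1} u"
  proof -
    have hm: "(\<lambda>x. w (snd x) * ((Bc B (snd x) (fst x))^2 - (Bc B 1 (fst x))^2)^2) \<in> borel_measurable (M \<Otimes>\<^sub>M lborel)"
    proof -
      have "(\<lambda>x. Bc B 1 (fst x)) \<in> borel_measurable (M \<Otimes>\<^sub>M lborel)"
        using measurable_comp[OF measurable_fst Bc_meas1[OF F]] by (simp add: comp_def)
      then show ?thesis unfolding w_def by measurable
    qed
    have h0: "0 \<le> w t * ((Bc B t \<omega>)^2 - (Bc B 1 \<omega>)^2)^2" for t \<omega> using w0 by simp
    have hc: "continuous_on {0..1} (\<lambda>t. w t * ((Bc B t \<omega>)^2 - (Bc B 1 \<omega>)^2)^2)" if "\<omega> \<in> space M" for \<omega>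
      using wc Bcc[OF that] by (intro continuous_intros)
    have hi: "integrable M (\<lambda>\<omega>. w t * ((Bc B t \<omega>)^2 - (Bc B 1 \<omega>)^2)^2)" if "t \<in> {0..1}" for t
      using fbm_incr(1)[OF F that] that by (simp add: Bc_eq)
    have hb: "(\<integral>\<omega>. w t * ((Bc B t \<omega>)^2 - (Bc B 1 \<omega>)^2)^2 \<partial>M) \<le> u t" if "t \<in> {0..1}" for t
    proof -
      have "(\<integral>\<omega>. w t * ((Bc B t \<omega>)^2 - (Bc B 1 \<omega>)^2)^2 \<partial>M) = w t * (\<integral>\<omega>. ((B t \<omega>)^2 - (B 1 \<omega>)^2)^2 \<partial>M)"
        using that by (simp add: Bc_eq)
      also have "\<dots> \<le> w t * (26 * (1 - t) powr (2*H))"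
        using fbm_incr(2)[OF F that] w0 by (intro mult_left_mono) auto
      finally show ?thesis unfolding u_def by simp
    qed
    show ?thesis unfolding J_def
      using tonelli_bound[OF P hm h0 hc hi hb uc] by blast
  qed
  have intu: "integral {0..1} u = 26 * kern"
    unfolding u_def kern_def w_def by (rule Henstock_Kurzweil_Integration.integral_mult_right)
  have pw: "(Y \<omega> - (B 1 \<omega>)\<^sup>2)\<^sup>2 \<le> 2 * c^2 * W * J \<omega> + 2 * (c * W - 1)^2 * (B 1 \<omega>)^4"
    if om: "\<omega> \<in> space M" for \<omega>
  proof -
    define b where "b = (B 1 \<omega>)^2"
    define K where "K = integral {0..1} (\<lambda>t. w t * ((Bc B t \<omega>)^2 - b))"
    have gc: "continuous_on {0..1} (\<lambda>t. (Bc B t \<omega>)^2 - b)" using Bcc[OF om] by (intro continuous_intros)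
    have i1: "(\<lambda>t. w t * (Bc B t \<omega>)^2) integrable_on {0..1}"
      using wc Bcc[OF om] by (intro integrable_continuous_interval continuous_intros)
    have i2: "(\<lambda>t. b * w t) integrable_on {0..1}"
      using wc by (intro integrable_continuous_interval continuous_intros)
    have KI: "K = I \<omega> - W * b"
    proof -
      have "K = integral {0..1} (\<lambda>t. w t * (Bc B t \<omega>)^2 - b * w t)"
        unfolding K_def by (rule integral_cong) (simp add: algebra_simps)
      also have "\<dots> = integral {0..1} (\<lambda>t. w t * (Bc B t \<omega>)^2) - integral {0..1} (\<lambda>t. b * w t)"
        by (rule Henstock_Kurzweil_Integration.integral_diff[OF i1 i2])
      also have "\<dots> = I \<omega> - W * b" unfolding I_def using Wint by simp
      finally show ?thesis .
    qed
    have CS: "K^2 \<le> W * J \<omega>"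
      using cs_weighted[OF wc gc] w0 Wint Wpos unfolding K_def J_def b_def by (simp add: Bc1)
    have "Y \<omega> - b = c * K + (c * W - 1) * b" unfolding YI KI by (simp add: algebra_simps)
    then have "(Y \<omega> - b)^2 = (c * K + (c * W - 1) * b)^2" by simp
    also have "\<dots> \<le> 2 * (c * K)^2 + 2 * ((c * W - 1) * b)^2"
      using sum_squares_bound[of "c*K" "(c * W - 1) * b"] by (simp add: power2_sum)
    also have "\<dots> = 2 * c^2 * K^2 + 2 * (c * W - 1)^2 * b^2" by (simp add: power_mult_distrib)
    also have "\<dots> \<le> 2 * c^2 * (W * J \<omega>) + 2 * (c * W - 1)^2 * b^2"
      using CS by (intro add_right_mono mult_left_mono) auto
    finally show ?thesis unfolding b_def by (simp add: power_mult[symmetric] mult.assoc)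
  qed
  have Ig: "integrable M (\<lambda>\<omega>. 2 * c^2 * W * J \<omega> + 2 * (c * W - 1)^2 * (B 1 \<omega>)^4)"
    using Jfacts B14(1) by simp
  have Id: "integrable M (\<lambda>\<omega>. (Y \<omega> - (B 1 \<omega>)\<^sup>2)\<^sup>2)"
  proof (rule Bochner_Integration.integrable_bound[OF Ig])
    show "(\<lambda>\<omega>. (Y \<omega> - (B 1 \<omega>)\<^sup>2)\<^sup>2) \<in> borel_measurable M" using Ym by measurable
    show "AE \<omega> in M. norm ((Y \<omega> - (B 1 \<omega>)\<^sup>2)\<^sup>2) \<le> norm (2 * c^2 * W * J \<omega> + 2 * (c * W - 1)^2 * (B 1 \<omega>)^4)"
    proof (rule AE_I2)
      fix \<omega> assume om: "\<omega> \<in> space M"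
      have J0: "0 \<le> J \<omega>" unfolding J_def
        by (rule integral_nonneg) (use wc Bcc[OF om] w0 in \<open>auto intro!: integrable_continuous_interval continuous_intros\<close>)
      have "0 \<le> 2 * c^2 * W * J \<omega> + 2 * (c * W - 1)^2 * (B 1 \<omega>)^4"
        using J0 Wpos by (intro add_nonneg_nonneg mult_nonneg_nonneg) auto
      then show "norm ((Y \<omega> - (B 1 \<omega>)\<^sup>2)\<^sup>2) \<le> norm (2 * c^2 * W * J \<omega> + 2 * (c * W - 1)^2 * (B 1 \<omega>)^4)"
        using pw[OF om] by simp
    qed
  qed
  have "(\<integral>\<omega>. (Y \<omega> - (B 1 \<omega>)\<^sup>2)\<^sup>2 \<partial>M) \<le> (\<integral>\<omega>. 2 * c^2 * W * J \<omega> + 2 * (c * W - 1)^2 * (B 1 \<omega>)^4 \<partial>M)"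
    by (rule integral_mono[OF Id Ig]) (rule pw)
  also have "\<dots> = 2 * c^2 * W * (\<integral>\<omega>. J \<omega> \<partial>M) + 2 * (c * W - 1)^2 * (\<integral>\<omega>. (B 1 \<omega>)^4 \<partial>M)"
    using Jfacts B14(1) by simp
  also have "\<dots> \<le> 2 * c^2 * W * (26 * kern) + 2 * (c * W - 1)^2 * 3"
    using Jfacts B14(2) intu Wpos by (intro add_mono mult_left_mono) auto
  also have "\<dots> = 52 * (c * W) * (c * kern) + 6 * (c * W - 1)^2" by (simp add: power2_eq_square algebra_simps)
  finally show "(\<integral>\<omega>. (Y \<omega> - (B 1 \<omega>)\<^sup>2)\<^sup>2 \<partial>M) \<le> 52 * (c * W) * (c * kern) + 6 * (c * W - 1)^2" .
qed

theorem proposition6: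
  fixes M :: "'a measure" and H :: real and B :: "real \<Rightarrow> 'a \<Rightarrow> real"
  assumes "fbm M H B"
  defines "Y \<equiv> (\<lambda>(\<beta>::real) \<omega>. (2*\<beta> + 2*H + 1) *
                   integral {0..1} (\<lambda>t. t powr (2*\<beta>) * (B t \<omega>)\<^sup>2))"
  shows "(\<forall>\<^sub>F \<beta> in at_top. Y \<beta> \<in> borel_measurable M \<and>
            integrable M (\<lambda>\<omega>. (Y \<beta> \<omega>)\<^sup>2)) \<and>
         ((\<lambda>\<beta>. \<integral>\<omega>. (Y \<beta> \<omega> - (B 1 \<omega>)\<^sup>2)\<^sup>2 \<partial>M) \<longlongrightarrow> 0) at_top"
proof -
  have H0: "0 < H" using assms(1) unfolding fbm_def by auto
  define G where "G = (\<lambda>\<beta>::real. 52 * ((2*\<beta> + 2*H + 1) * (1 / (2*\<beta> + 1))) *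
      ((2*\<beta> + 2*H + 1) * integral {0..1} (\<lambda>t. t powr (2*\<beta>) * (1 - t) powr (2*H))) +
      6 * ((2*\<beta> + 2*H + 1) * (1 / (2*\<beta> + 1)) - 1)^2)"
  have ev: "\<forall>\<^sub>F \<beta> in at_top. (0::real) < \<beta>" by (rule eventually_gt_at_top)
  note mb = main_bound[OF assms(1)]
  have Yeq: "Y \<beta> = (\<lambda>\<omega>. (2*\<beta> + 2*H + 1) * integral {0..1} (\<lambda>t. t powr (2*\<beta>) * (B t \<omega>)\<^sup>2))" for \<beta>
    unfolding Y_def by simp
  have part1: "\<forall>\<^sub>F \<beta> in at_top. Y \<beta> \<in> borel_measurable M \<and> integrable M (\<lambda>\<omega>. (Y \<beta> \<omega>)\<^sup>2)"
    using ev by eventually_elim (use mb(1,2) Yeq in auto)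
  have L: "((\<lambda>\<beta>::real. (2*\<beta> + 2*H + 1) * (1 / (2*\<beta> + 1))) \<longlongrightarrow> 1) at_top" by real_asymp
  have "(G \<longlongrightarrow> 52 * 1 * 0 + 6 * (1 - 1)^2) at_top"
    unfolding G_def by (intro tendsto_intros L kernel_lim H0)
  then have G0: "(G \<longlongrightarrow> 0) at_top" by simp
  have part2: "((\<lambda>\<beta>. \<integral>\<omega>. (Y \<beta> \<omega> - (B 1 \<omega>)\<^sup>2)\<^sup>2 \<partial>M) \<longlongrightarrow> 0) at_top"
  proof (rule tendsto_sandwich[OF _ _ tendsto_const G0])
    show "\<forall>\<^sub>F \<beta> in at_top. 0 \<le> (\<integral>\<omega>. (Y \<beta> \<omega> - (B 1 \<omega>)\<^sup>2)\<^sup>2 \<partial>M)" by simp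
    show "\<forall>\<^sub>F \<beta> in at_top. (\<integral>\<omega>. (Y \<beta> \<omega> - (B 1 \<omega>)\<^sup>2)\<^sup>2 \<partial>M) \<le> G \<beta>"
      using ev by eventually_elim (use mb(3) Yeq in \<open>auto simp: G_def\<close>)
  qed
  show ?thesis using part1 part2 by blast
qed

end
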